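(* Let $p\ge 1$, let $F:\mathbb{R}^p\to\mathbb{R}^p$ and $G(\boldsymbol{x}) := F(\boldsymbol{x})-\boldsymbol{x}$, and let $\boldsymbol{x}^\ast\in\mathbb{R}^p$. Assume (A1): $G$ is differentiable in an open convex set $D$ containing $\boldsymbol{x}^\ast$, $G(\boldsymbol{x}^\ast)=0$, $dG(\boldsymbol{x}^\ast)$ is non-singular, and for some constants $d>0$ and $K$, $\|dG(\boldsymbol{x})-dG(\boldsymbol{x}^\ast)\|\le K\|\boldsymbol{x}-\boldsymbol{x}^\ast\|^d$ for all $\boldsymbol{x}\in D$. Suppose there exist a constant $\mu_2\ge 0$, a non-singular symmetric matrix $M\in\mathbb{R}^{p\times p}$, and a neighborhood $N'$ of $(\boldsymbol{x}^\ast,dG(\boldsymbol{x}^\ast)^{-1})$ such that for all $(\boldsymbol{x},H)\in N'$, with $\boldsymbol{v}=G(F(\boldsymbol{x}))-G(\boldsymbol{x})\neq 0$, $$\frac{\|M\boldsymbol{v}-M^{-1}\boldsymbol{v}\|}{\|M^{-1}\boldsymbol{v}\|}\le\mu_2\|\boldsymbol{v}\|^d.$$ Then the updates $\bar{\boldsymbol{x}}=\boldsymbol{x}-HG(\boldsymbol{x})$ and $\bar H=H-H\frac{\boldsymbol{v}\boldsymbol{v}^T}{\boldsymbol{v}^T\boldsymbol{v}}+\frac{\boldsymbol{u}\boldsymbol{v}^T}{\boldsymbol{v}^T\boldsymbol{v}}$ are well-defined in a neighborhood $N$ of $(\boldsymbol{x}^\ast,dG(\boldsymbol{x}^\ast)^{-1})$,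 and the corresponding iteration $\boldsymbol{x}_{k+1}=\boldsymbol{x}_k-H_kG(\boldsymbol{x}_k)$, $H_{k+1}=\bar H$ evaluated at $(\boldsymbol{x}_k,H_k)$, is locally convergent to $\boldsymbol{x}^\ast$: there exist $\epsilon>0$, $\delta>0$ such that whenever $\|\boldsymbol{x}_0-\boldsymbol{x}^\ast\|<\epsilon$ and $\|H_0-dG(\boldsymbol{x}^\ast)^{-1}\|_M<\delta$, the iteration is well-defined and $\boldsymbol{x}_k\to\boldsymbol{x}^\ast$.
   Context: $F$ is a majorization–minimization (MM) algorithm map and $G$ its residual; $dG$ denotes the Jacobian of $G$. $\|\cdot\|$ is a chosen vector norm on $\mathbb{R}^p$ and, for matrices, its induced operator norm; $\|A\|_M:=\|MAM\|_F$ with $\|\cdot\|_F$ the Frobenius norm. For a pair $(\boldsymbol{x},H)$, $\boldsymbol{u}=F(\boldsymbol{x})-\boldsymbol{x}$ and $\boldsymbol{v}=G(F(\boldsymbol{x}))-G(\boldsymbol{x})$. Standing assumption: the MM map is locally convergent to $\boldsymbol{x}^\ast$ in a neighborhood $S$ of $\boldsymbol{x}^\ast$ with linear rate $\tau$, i.e. $\|F(\boldsymbol{x})-\boldsymbol{x}^\ast\|\le\tau\|\boldsymbol{x}-\boldsymbol{x}^\ast\|$ for all $\boldsymbol{x}\in S$, with $\tau\in(0,1)$. *)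

theory Defs
  imports "HOL-Analysis.Analysis"
begin

definition is_vnorm :: "(real^'n \<Rightarrow> real) \<Rightarrow> bool" where
  "is_vnorm nv \<longleftrightarrow>
     (\<forall>x. nv x = 0 \<longleftrightarrow> x = 0) \<and>
     (\<forall>c x. nv (c *\<^sub>R x) = \<bar>c\<bar> * nv x) \<and>
     (\<forall>x y. nv (x + y) \<le> nv x + nv y)"

definition opnorm :: "(real^'n \<Rightarrow> real) \<Rightarrow> real^'n^'n \<Rightarrow> real" where
  "opnorm nv A = Sup {nv (A *v x) / nv x | x. x \<noteq> 0}"

definition frob_norm :: "real^'n^'m \<Rightarrow> real" where
  "frob_norm A = sqrt (\<Sum>i\<in>UNIV. \<Sum>j\<in>UNIV. (A $ i $ j)^2)"

definition outer :: "real^'m \<Rightarrow> real^'n \<Rightarrow> real^'n^'m" where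
  "outer u v = (\<chi> i j. u $ i * v $ j)"

definition resid :: "(real^'n \<Rightarrow> real^'n) \<Rightarrow> real^'n \<Rightarrow> real^'n" where
  "resid F x = F x - x"

definition qn_u :: "(real^'n \<Rightarrow> real^'n) \<Rightarrow> real^'n \<Rightarrow> real^'n" where
  "qn_u F x = F x - x"

definition qn_v :: "(real^'n \<Rightarrow> real^'n) \<Rightarrow> real^'n \<Rightarrow> real^'n" where
  "qn_v F x = resid F (F x) - resid F x"

text \<open>One step of the quasi-Newton iteration (x,H) to (xbar,Hbar).
  When v = 0 the division is by zero; this only happens (near x*) at x = x*,
  where G(x*) = 0 so the iterate is stationary.\<close>
definition qn_step :: "(real^'n \<Rightarrow> real^'n) \<Rightarrow> (real^'n) \<times> (real^'n^'n) \<Rightarrow> (real^'n) \<times> (real^'n^'n)" where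
  "qn_step F xH = (let x = fst xH; H = snd xH; u = qn_u F x; v = qn_v F x in
     (x - H *v resid F x,
      H - inverse (v \<bullet> v) *\<^sub>R (H ** outer v v) + inverse (v \<bullet> v) *\<^sub>R outer u v))"

end

theory Submission
  imports Defs
begin


lemma frob_eq_norm: "frob_norm (A::real^'n^'m) = norm A"
  unfolding frob_norm_def norm_vec_def L2_set_def
  by (simp add: sum_nonneg)

lemma norm_mv_le: "norm ((A::real^'n^'m) *v x) \<le> norm A * norm x"
proof -
  have "norm (A *v x) = L2_set (\<lambda>i. \<bar>(A$i) \<bullet> x\<bar>) UNIV"
    by (simp add: norm_vec_def matrix_vector_mul_component)
  also have "\<dots> \<le> L2_set (\<lambda>i. norm x * norm (A$i)) UNIV"
    apply (rule L2_set_mono)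
    subgoal for i using Cauchy_Schwarz_ineq2[of "A$i" x] by (simp add: mult.commute)
    by simp
  also have "\<dots> = norm x * norm A"
    by (simp add: norm_vec_def L2_set_right_distrib)
  finally show ?thesis by (simp add: mult.commute)
qed

lemma outer_row: "outer u v $ i = u $ i *\<^sub>R v"
  by (simp add: outer_def vec_eq_iff)

lemma norm_outer: "norm (outer (u::real^'m) (v::real^'n)) = norm u * norm v"
proof -
  have r: "norm (outer u v $ i) = norm v * \<bar>u$i\<bar>" for i
    by (simp add: outer_row)
  have "norm (outer u v) = L2_set (\<lambda>i. norm v * \<bar>u$i\<bar>) UNIV"
    unfolding norm_vec_def[of "outer u v"] r ..
  also have "\<dots> = norm v * norm u"
    by (simp add: norm_vec_def L2_set_right_distrib[symmetric])
  finally show ?thesis by simp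
qed

lemma mult_outer: "(A::real^'m^'k) ** outer u (v::real^'n) = outer (A *v u) v"
  by (simp add: outer_def matrix_matrix_mult_def matrix_vector_mult_def vec_eq_iff sum_distrib_right mult.assoc)

lemma outer_diff: "outer (a - b) c = outer a c - outer b c"
  by (simp add: outer_def vec_eq_iff algebra_simps)

lemma matrix_add_rdistrib: "((A::real^'n^'m) + B) ** (C::real^'k^'n) = A ** C + B ** C"
  by (vector matrix_matrix_mult_def sum.distrib[symmetric] field_simps)

lemma norm_rows_le:
  fixes X Y :: "real^'n^'m"
  assumes "\<And>i. norm (X$i) \<le> norm (Y$i)"
  shows "norm X \<le> norm Y"
  unfolding norm_vec_def[of X] norm_vec_def[of Y]
  by (rule L2_set_mono) (auto simp: assms)

lemma proj_row: "(E ** outer v v) $ i = ((E $ i) \<bullet> v) *\<^sub>R (v::real^'n)"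
  by (simp add: mult_outer outer_row matrix_vector_mul_component)

lemma norm_proj_le:
  fixes E :: "real^'n^'m"
  shows "norm (E - inverse (v \<bullet> v) *\<^sub>R (E ** outer v v)) \<le> norm E"
proof -
  have row: "norm (e - inverse (v \<bullet> v) *\<^sub>R ((e \<bullet> v) *\<^sub>R v)) \<le> norm e" for e :: "real^'n"
  proof (cases "v = 0")
    case True then show ?thesis by simp
  next
    case False
    then have vv: "v \<bullet> v > 0" by simp
    let ?w = "e - inverse (v \<bullet> v) *\<^sub>R ((e \<bullet> v) *\<^sub>R v)"
    have "?w \<bullet> ?w = e \<bullet> e - (e \<bullet> v)^2 / (v \<bullet> v)"
      using vv by (simp add: inner_diff_left inner_diff_right algebra_simps power2_eq_square field_simps inner_commute)
    also have "\<dots> \<le> e \<bullet> e" using vv by simp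
    finally have "(norm ?w)^2 \<le> (norm e)^2" by (simp add: power2_norm_eq_inner)
    then show ?thesis by (simp add: power2_le_iff_abs_le)
  qed
  show ?thesis
    by (rule norm_rows_le) (metis (no_types) row proj_row vector_minus_component vector_scaleR_component)
qed



lemma vn_basic:
  assumes "is_vnorm nv"
  shows "nv 0 = 0" "nv (- x) = nv x" "nv (x + y) \<le> nv x + nv y" "nv (c *\<^sub>R x) = \<bar>c\<bar> * nv x"
    "nv x = 0 \<longleftrightarrow> x = 0"
proof -
  show "nv 0 = 0" using assms unfolding is_vnorm_def by blast
  have "nv ((-1) *\<^sub>R x) = \<bar>-1\<bar> * nv x" using assms unfolding is_vnorm_def by blast
  then show "nv (- x) = nv x" by simp
  show "nv (x + y) \<le> nv x + nv y" "nv (c *\<^sub>R x) = \<bar>c\<bar> * nv x" "nv x = 0 \<longleftrightarrow> x = 0"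
    using assms unfolding is_vnorm_def by blast+
qed

lemma vn_nonneg:
  assumes "is_vnorm nv" shows "nv x \<ge> 0"
proof -
  have "nv 0 \<le> nv x + nv (-x)" using vn_basic(3)[OF assms, of x "-x"] by simp
  then show ?thesis using vn_basic(1,2)[OF assms] by simp
qed

lemma vn_sum:
  assumes "is_vnorm nv" "finite A"
  shows "nv (sum f A) \<le> (\<Sum>i\<in>A. nv (f i))"
  using assms(2)
proof (induction A rule: finite_induct)
  case empty then show ?case using vn_basic(1)[OF assms(1)] by simp
next
  case (insert a A)
  then show ?case using vn_basic(3)[OF assms(1), of "f a" "sum f A"] by simp
qed

lemma vn_upper:
  assumes nv: "is_vnorm nv"
  shows "\<exists>c2>0. \<forall>x. nv x \<le> c2 * norm x"
proof -
  define C where "C = (\<Sum>i\<in>UNIV. nv (axis i (1::real) :: real^'a)) + 1"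
  have C: "C > 0" unfolding C_def using vn_nonneg[OF nv] by (simp add: sum_nonneg add_nonneg_pos)
  have "nv x \<le> C * norm x" for x :: "real^'a"
  proof -
    have "nv x = nv (\<Sum>i\<in>UNIV. x$i *\<^sub>R axis i 1)"
      using basis_expansion[of x] by (simp add: scalar_mult_eq_scaleR)
    also have "\<dots> \<le> (\<Sum>i\<in>UNIV. nv (x$i *\<^sub>R axis i 1))" by (rule vn_sum[OF nv]) simp
    also have "\<dots> = (\<Sum>i\<in>UNIV. \<bar>x$i\<bar> * nv (axis i 1))" using vn_basic(4)[OF nv] by simp
    also have "\<dots> \<le> (\<Sum>i\<in>UNIV. norm x * nv (axis i 1))"
      by (rule sum_mono) (simp add: mult_right_mono component_le_norm_cart vn_nonneg[OF nv])
    also have "\<dots> \<le> norm x * C" unfolding C_def by (simp add: sum_distrib_left distrib_left)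
    finally show ?thesis by (simp add: mult.commute)
  qed
  with C show ?thesis by blast
qed

lemma vn_equiv:
  fixes nv :: "real^'a \<Rightarrow> real"
  assumes nv: "is_vnorm nv"
  shows "\<exists>c1 c2. 0 < c1 \<and> 0 < c2 \<and> (\<forall>x. c1 * norm x \<le> nv x \<and> nv x \<le> c2 * norm x)"
proof -
  obtain c2 where c2: "c2 > 0" "\<And>x. nv x \<le> c2 * norm x" using vn_upper[OF nv] by blast
  have lip: "\<bar>nv x - nv y\<bar> \<le> c2 * norm (x - y)" for x y
  proof -
    have "nv x \<le> nv y + nv (x - y)" using vn_basic(3)[OF nv, of y "x - y"] by simp
    moreover have "nv y \<le> nv x + nv (y - x)" using vn_basic(3)[OF nv, of x "y - x"] by simp
    moreover have "nv (y - x) = nv (x - y)" using vn_basic(2)[OF nv, of "x - y"] by simp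
    ultimately show ?thesis using c2(2)[of "x - y"] by linarith
  qed
  have cont: "continuous_on (sphere 0 1) nv"
    unfolding continuous_on_iff
  proof (intro ballI allI impI)
    fix x e assume "(e::real) > 0"
    show "\<exists>d>0. \<forall>x'\<in>sphere 0 1. dist x' x < d \<longrightarrow> dist (nv x') (nv x) < e"
    proof (intro exI[of _ "e / c2"] conjI ballI impI)
      show "e / c2 > 0" using \<open>e > 0\<close> c2 by simp
      fix x' assume "dist x' x < e / c2"
      then have "c2 * norm (x' - x) < e" using c2(1) by (simp add: dist_norm field_simps)
      then show "dist (nv x') (nv x) < e" using lip[of x' x] by (simp add: dist_real_def)
    qed
  qed
  obtain i :: 'a where True by blast
  have ne: "sphere (0::real^'a) 1 \<noteq> {}"
    using norm_axis_1[of i] by (metis mem_sphere_0 empty_iff)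
  obtain z where z: "z \<in> sphere 0 1" "\<And>y. y \<in> sphere 0 1 \<Longrightarrow> nv z \<le> nv y"
    using continuous_attains_inf[OF compact_sphere ne cont] by blast
  have "z \<noteq> 0" using z(1) by auto
  then have c1: "nv z > 0" using vn_basic(5)[OF nv, of z] vn_nonneg[OF nv, of z] by simp
  have "nv z * norm x \<le> nv x" for x
  proof (cases "x = 0")
    case True then show ?thesis using vn_basic(1)[OF nv] by simp
  next
    case False
    then have "inverse (norm x) *\<^sub>R x \<in> sphere 0 1" by simp
    then have "nv z \<le> nv (inverse (norm x) *\<^sub>R x)" by (rule z(2))
    also have "\<dots> = nv x / norm x" using vn_basic(4)[OF nv] by (simp add: field_simps)
    finally show ?thesis using False by (simp add: field_simps)
  qed
  with c1 c2 show ?thesis by blast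
qed



lemma minv: "invertible (A::real^'n^'n) \<Longrightarrow> A ** matrix_inv A = mat 1 \<and> matrix_inv A ** A = mat 1"
  unfolding invertible_def matrix_inv_def by (rule someI_ex)

lemma lin_sandwich: "bounded_linear (\<lambda>W::real^'n^'n. (P::real^'n^'n) ** W ** Q)"
proof -
  have "linear (\<lambda>W::real^'n^'n. P ** W ** Q)"
    by (auto simp: linear_iff matrix_matrix_mult_def vec_eq_iff sum.distrib algebra_simps sum_distrib_left sum_distrib_right)
  then show ?thesis by (simp add: linear_conv_bounded_linear)
qed

lemma sandwich_bound:
  assumes "invertible (M::real^'n^'n)"
  shows "\<exists>C>0. \<forall>E. norm E \<le> C * norm (M ** E ** M)"
proof -
  obtain C where C: "C > 0" "\<And>W. norm (matrix_inv M ** W ** matrix_inv M) \<le> norm W * C"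
    using bounded_linear.pos_bounded[OF lin_sandwich[of "matrix_inv M" "matrix_inv M"]] by blast
  have "E = matrix_inv M ** (M ** E ** M) ** matrix_inv M" for E
  proof -
    have "matrix_inv M ** (M ** E ** M) ** matrix_inv M = (matrix_inv M ** M) ** E ** (M ** matrix_inv M)"
      by (simp add: matrix_mul_assoc)
    then show ?thesis using minv[OF assms] by simp
  qed
  then have "norm E \<le> C * norm (M ** E ** M)" for E
    using C(2)[of "M ** E ** M"] by (metis mult.commute)
  with C(1) show ?thesis by blast
qed



lemma core:
  fixes F :: "real^'n \<Rightarrow> real^'n" and J Ji :: "real^'n^'n" and xs :: "real^'n"
  assumes r0: "r0 > 0" and A: "A \<ge> 1" and L: "L \<ge> 0" and d: "d > 0"
    and Fb: "\<And>x. norm (x - xs) < r0 \<Longrightarrow> norm (F x - xs) \<le> A * norm (x - xs)"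
    and tay: "\<And>\<rho> x y. \<rho> \<le> r0 \<Longrightarrow> norm (x - xs) \<le> \<rho> \<Longrightarrow> norm (y - xs) \<le> \<rho> \<Longrightarrow>
               norm (resid F y - resid F x - J *v (y - x)) \<le> L * \<rho> powr d * norm (y - x)"
    and root: "resid F xs = 0"
    and JiJ: "Ji ** J = mat 1"
  shows "\<exists>\<epsilon>>0. \<exists>e>0. (\<forall>x. norm (x - xs) < \<epsilon> \<longrightarrow> x \<noteq> xs \<longrightarrow> qn_v F x \<noteq> 0) \<and>
     (\<forall>x0 H0. norm (x0 - xs) < \<epsilon> \<longrightarrow> norm (H0 - Ji) \<le> e \<longrightarrow>
        (\<forall>k. norm (fst ((qn_step F ^^ k) (x0,H0)) - xs) < \<epsilon>) \<and>
        (\<lambda>k. fst ((qn_step F ^^ k) (x0,H0))) \<longlonglongrightarrow> xs)"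
proof -
  define nJ where "nJ = norm J"
  define nJi where "nJi = norm Ji"
  define P where "P = L * A powr d"
  define B where "B = 2 * nJi^2 * P"
  define e where "e = 1 / (4 * (nJ + 1))"
  define r where "r = (1/2::real) powr d"
  define c where "c = min (e / 2 * (1 - r) / (B + 1)) (1 / ((4 * nJi + 1) * (P + 1)))"
  define \<epsilon> where "\<epsilon> = min (r0 / (2 * A)) (c powr (1 / d))"
  have nJ: "nJ \<ge> 0" and nJi: "nJi \<ge> 0" unfolding nJ_def nJi_def by simp_all
  have Apd: "A powr d \<ge> 1" using A d by (simp add: ge_one_powr_ge_zero)
  have P: "P \<ge> 0" unfolding P_def using L Apd by simp
  have B: "B \<ge> 0" unfolding B_def using P by simp
  have e: "e > 0" unfolding e_def using nJ by simp
  have e4: "e * (nJ + 1) = 1/4" unfolding e_def using nJ by simp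
  have r: "0 < r" "r < 1" unfolding r_def using d by (simp_all add: powr01_less_one)
  have c: "c > 0" unfolding c_def using e r B P nJi by simp
  have eps: "\<epsilon> > 0" unfolding \<epsilon>_def using c r0 A by simp
  have epsr0: "A * \<epsilon> \<le> r0 / 2" unfolding \<epsilon>_def using A r0 by (simp add: field_simps min_def)
  have epsr0': "\<epsilon> \<le> r0 / 2" using epsr0 A eps by (smt (verit) mult_le_cancel_right1)
  have epsd: "\<epsilon> powr d \<le> c"
  proof -
    have "\<epsilon> powr d \<le> (c powr (1/d)) powr d"
      by (rule powr_mono2) (use d eps in \<open>auto simp: \<epsilon>_def\<close>)
    also have "\<dots> = c" using d c by (simp add: powr_powr)
    finally show ?thesis .
  qed
  have c1: "(B + 1) * c \<le> e / 2 * (1 - r)"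
  proof -
    have "c \<le> e / 2 * (1 - r) / (B + 1)" unfolding c_def by (rule min.cobounded1)
    moreover have "B + 1 > 0" using B by simp
    ultimately show ?thesis by (simp add: field_simps)
  qed
  have c2: "(4 * nJi + 1) * (P + 1) * c \<le> 1"
  proof -
    have "c \<le> 1 / ((4 * nJi + 1) * (P + 1))" unfolding c_def by (rule min.cobounded2)
    moreover have "(4 * nJi + 1) * (P + 1) > 0" using P nJi by simp
    ultimately show ?thesis by (simp add: field_simps)
  qed
  have Bed: "B * \<epsilon> powr d \<le> e / 2 * (1 - r)"
  proof -
    have "B * \<epsilon> powr d \<le> (B + 1) * c" using epsd B by (smt (verit) mult_mono powr_ge_zero)
    then show ?thesis using c1 by linarith
  qed
  have Bed': "B * \<epsilon> powr d / (1 - r) \<le> e / 2" using Bed r by (simp add: field_simps)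
  have JiJv: "Ji *v (J *v z) = z" for z by (simp add: matrix_vector_mul_assoc JiJ)
  have nJiv: "norm (Ji *v z) \<le> nJi * norm z" for z unfolding nJi_def by (rule norm_mv_le)
  have nJv: "norm (J *v z) \<le> nJ * norm z" for z unfolding nJ_def by (rule norm_mv_le)

  have step: "norm (fst (qn_step F (x,H)) - xs) \<le> norm (x - xs) / 2 \<and>
      norm (snd (qn_step F (x,H)) - Ji) \<le> norm (H - Ji) + B * norm (x - xs) powr d \<and>
      (x \<noteq> xs \<longrightarrow> qn_v F x \<noteq> 0)"
    if xe: "norm (x - xs) \<le> \<epsilon>" and He: "norm (H - Ji) \<le> e" for x H
  proof -
    define t where "t = norm (x - xs)"
    define \<eta> where "\<eta> = P * t powr d"
    have t: "t \<ge> 0" "t \<le> \<epsilon>" using xe unfolding t_def by simp_all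
    have tr0: "t < r0" using t epsr0' r0 by linarith
    have td: "t powr d \<le> \<epsilon> powr d" by (rule powr_mono2) (use d t in auto)
    have eta0: "\<eta> \<ge> 0" unfolding \<eta>_def using P by simp
    have eta1: "(4 * nJi + 1) * \<eta> \<le> 1"
    proof -
      have "\<eta> \<le> (P + 1) * c" unfolding \<eta>_def using td epsd P
        by (smt (verit) mult_mono powr_ge_zero)
      then have "(4 * nJi + 1) * \<eta> \<le> (4 * nJi + 1) * ((P + 1) * c)"
        using nJi by (simp add: mult_left_mono)
      then show ?thesis using c2 by (simp add: mult.assoc)
    qed
    have eta_nJi: "nJi * \<eta> \<le> 1/4" using eta1 eta0 by (simp add: algebra_simps)
    have eta_le1: "\<eta> \<le> 1"
    proof -
      have "\<eta> \<le> (4 * nJi + 1) * \<eta>" using eta0 nJi by (simp add: algebra_simps)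
      then show ?thesis using eta1 by linarith
    qed
    have Lt: "L * t powr d \<le> \<eta>" unfolding \<eta>_def P_def using L Apd
      by (simp add: mult_left_mono mult_right_mono_neg mult.assoc)
       (metis mult_left_mono mult_right_mono powr_ge_zero mult_cancel_right1 mult.commute Apd)
    define g where "g = resid F x"
    have hg: "norm (g - J *v (x - xs)) \<le> \<eta> * t"
    proof -
      have "norm (resid F x - resid F xs - J *v (x - xs)) \<le> L * t powr d * norm (x - xs)"
        by (rule tay) (use tr0 in \<open>auto simp: t_def\<close>)
      also have "\<dots> \<le> \<eta> * t" using Lt t by (simp add: t_def mult_right_mono)
      finally show ?thesis by (simp add: g_def root)
    qed
    have ng: "norm g \<le> (nJ + 1) * t"
    proof -
      have "norm g \<le> norm (J *v (x - xs)) + norm (g - J *v (x - xs))"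
        by (metis add.commute diff_add_cancel norm_triangle_ineq)
      also have "\<dots> \<le> nJ * t + \<eta> * t" using nJv[of "x - xs"] hg by (simp add: t_def)
      also have "\<dots> \<le> (nJ + 1) * t" using mult_right_mono[OF eta_le1 t(1)] by (simp add: algebra_simps)
      finally show ?thesis .
    qed
    have fst_step: "fst (qn_step F (x,H)) = x - H *v g"
      by (simp add: qn_step_def Let_def g_def)
    have xdec: "fst (qn_step F (x,H)) - xs = Ji *v (J *v (x - xs) - g) - (H - Ji) *v g"
      unfolding fst_step by (simp add: algebra_simps JiJv)
    have i: "norm (fst (qn_step F (x,H)) - xs) \<le> t / 2"
    proof -
      have "norm (fst (qn_step F (x,H)) - xs) \<le> norm (Ji *v (J *v (x - xs) - g)) + norm ((H - Ji) *v g)"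
        unfolding xdec by (rule norm_triangle_ineq4)
      also have "\<dots> \<le> nJi * (\<eta> * t) + e * ((nJ + 1) * t)"
      proof (rule add_mono)
        show "norm (Ji *v (J *v (x - xs) - g)) \<le> nJi * (\<eta> * t)"
          using nJiv[of "J *v (x - xs) - g"] hg nJi
          by (smt (verit) mult_left_mono norm_minus_commute)
        show "norm ((H - Ji) *v g) \<le> e * ((nJ + 1) * t)"
          using norm_mv_le[of "H - Ji" g] He ng
          by (smt (verit) mult_mono norm_ge_zero e)
      qed
      also have "\<dots> = (nJi * \<eta>) * t + (e * (nJ + 1)) * t" by (simp add: algebra_simps)
      also have "\<dots> \<le> t / 4 + t / 4" using mult_right_mono[OF eta_nJi t(1)] e4 by (simp only:)
      finally show ?thesis by simp
    qed
    define u where "u = qn_u F x"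
    define v where "v = qn_v F x"
    have ug: "u = g" by (simp add: u_def g_def qn_u_def resid_def)
    have Fx: "norm (F x - xs) \<le> A * t" using Fb[OF tr0[unfolded t_def]] by (simp add: t_def)
    have At: "A * t \<le> r0" using epsr0 mult_left_mono[OF t(2), of A] A r0 by linarith
    have tAt: "t \<le> A * t" using A t by (simp add: mult_right_mono[of 1 A t, simplified])
    have hv: "norm (v - J *v u) \<le> \<eta> * norm u"
    proof -
      have "norm (resid F (F x) - resid F x - J *v (F x - x)) \<le> L * (A * t) powr d * norm (F x - x)"
        by (rule tay[OF At]) (use tAt Fx in \<open>auto simp: t_def\<close>)
      moreover have "L * (A * t) powr d = \<eta>" unfolding \<eta>_def P_def using A t
        by (simp add: powr_mult mult.assoc)
      ultimately show ?thesis by (simp add: v_def u_def qn_v_def qn_u_def)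
    qed
    have uv: "norm u \<le> 2 * nJi * norm v"
    proof -
      have "norm u = norm (Ji *v (J *v u))" by (simp add: JiJv)
      also have "\<dots> \<le> nJi * norm (J *v u)" by (rule nJiv)
      also have "\<dots> \<le> nJi * (norm v + \<eta> * norm u)"
      proof -
        have "norm (J *v u) \<le> norm v + norm (v - J *v u)"
          using norm_triangle_ineq2[of "J *v u" v] norm_minus_commute[of "J *v u" v] by linarith
        then show ?thesis using hv nJi by (smt (verit) mult_left_mono)
      qed
      also have "\<dots> = nJi * norm v + (nJi * \<eta>) * norm u" by (simp add: algebra_simps)
      also have "\<dots> \<le> nJi * norm v + 1/4 * norm u" using mult_right_mono[OF eta_nJi norm_ge_zero[of u]] by linarith
      finally have "3/4 * norm u \<le> nJi * norm v" by simp
      moreover have "nJi * norm v \<ge> 0" using nJi by simp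
      ultimately show ?thesis by linarith
    qed
    have hw: "norm (u - Ji *v v) \<le> B * t powr d * norm v"
    proof -
      have "u - Ji *v v = Ji *v (J *v u - v)" by (simp add: algebra_simps JiJv)
      then have "norm (u - Ji *v v) \<le> nJi * norm (J *v u - v)" using nJiv by simp
      also have "\<dots> \<le> nJi * (\<eta> * norm u)" using hv nJi by (simp add: mult_left_mono norm_minus_commute)
      also have "\<dots> \<le> nJi * (\<eta> * (2 * nJi * norm v))" using uv nJi eta0 by (simp add: mult_left_mono)
      also have "\<dots> = B * t powr d * norm v" unfolding B_def \<eta>_def by (simp add: power2_eq_square algebra_simps)
      finally show ?thesis .
    qed
    have iii: "x \<noteq> xs \<longrightarrow> qn_v F x \<noteq> 0"
    proof
      assume "x \<noteq> xs"
      then have tpos: "t > 0" by (simp add: t_def)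
      have "t = norm (Ji *v (J *v (x - xs)))" by (simp add: JiJv t_def)
      also have "\<dots> \<le> nJi * norm (J *v (x - xs))" by (rule nJiv)
      also have "\<dots> \<le> nJi * (norm g + \<eta> * t)"
      proof -
        have "norm (J *v (x - xs)) \<le> norm g + norm (g - J *v (x - xs))"
          using norm_triangle_ineq2[of "J *v (x - xs)" g] norm_minus_commute[of "J *v (x - xs)" g] by linarith
        then show ?thesis using hg nJi by (smt (verit) mult_left_mono)
      qed
      also have "\<dots> = nJi * norm g + (nJi * \<eta>) * t" by (simp add: algebra_simps)
      also have "\<dots> \<le> nJi * norm g + 1/4 * t" using mult_right_mono[OF eta_nJi t(1)] by linarith
      finally have "nJi * norm g > 0" using tpos by linarith
      then have "norm u > 0" using ug nJi by (metis mult_zero_right norm_ge_zero order_less_irrefl order_le_less)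
      then have "norm v \<noteq> 0" using uv by auto
      then have "norm v > 0" by simp
      then show "qn_v F x \<noteq> 0" by (simp add: v_def)
    qed
    have snd_step: "snd (qn_step F (x,H)) = H - inverse (v \<bullet> v) *\<^sub>R (H ** outer v v) + inverse (v \<bullet> v) *\<^sub>R outer u v"
      by (simp add: qn_step_def Let_def u_def v_def)
    have Hdec: "snd (qn_step F (x,H)) - Ji = ((H - Ji) - inverse (v \<bullet> v) *\<^sub>R ((H - Ji) ** outer v v))
        + inverse (v \<bullet> v) *\<^sub>R outer (u - Ji *v v) v"
    proof -
      have "H ** outer v v = (H - Ji) ** outer v v + outer (Ji *v v) v"
        by (metis diff_add_cancel matrix_add_rdistrib mult_outer)
      then show ?thesis unfolding snd_step outer_diff by (simp add: algebra_simps)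
    qed
    have ii: "norm (snd (qn_step F (x,H)) - Ji) \<le> norm (H - Ji) + B * t powr d"
    proof (cases "v = 0")
      case True
      then show ?thesis using snd_step B by (simp add: outer_def)
    next
      case False
      then have nv: "norm v > 0" by simp
      have vv: "v \<bullet> v = (norm v)^2" by (simp add: power2_norm_eq_inner)
      have "norm (snd (qn_step F (x,H)) - Ji) \<le> norm (H - Ji) + norm (inverse (v \<bullet> v) *\<^sub>R outer (u - Ji *v v) v)"
        unfolding Hdec using norm_proj_le[of "H - Ji" v]
        by (smt (verit) norm_triangle_ineq)
      also have "norm (inverse (v \<bullet> v) *\<^sub>R outer (u - Ji *v v) v) = norm (u - Ji *v v) / norm v"
        using nv by (simp add: norm_outer vv power2_eq_square field_simps)
      also have "\<dots> \<le> B * t powr d" using hw nv by (simp add: field_simps)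
      finally show ?thesis by simp
    qed
    show ?thesis using i ii iii by (simp add: t_def)
  qed
  have firstc: "\<forall>x. norm (x - xs) < \<epsilon> \<longrightarrow> x \<noteq> xs \<longrightarrow> qn_v F x \<noteq> 0"
    using step[of _ Ji] e by simp
  have rpow: "((1/2::real)^k * s) powr d = r^k * s powr d" if "s \<ge> 0" for k s
  proof -
    have "((1/2::real)^k) powr d = r^k"
      unfolding r_def by (simp add: powr_realpow[symmetric] powr_powr powr_power mult.commute)
    then show ?thesis using that by (simp add: powr_mult)
  qed
  have second: "(\<forall>k. norm (fst ((qn_step F ^^ k) (x0,H0)) - xs) < \<epsilon>) \<and>
        (\<lambda>k. fst ((qn_step F ^^ k) (x0,H0))) \<longlonglongrightarrow> xs"
    if x0: "norm (x0 - xs) < \<epsilon>" and H0: "norm (H0 - Ji) \<le> e / 2" for x0 H0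
  proof -
    define X where "X k = (qn_step F ^^ k) (x0,H0)" for k
    define t0 where "t0 = norm (x0 - xs)"
    have t0: "0 \<le> t0" "t0 < \<epsilon>" using x0 by (simp_all add: t0_def)
    have hk0: "(1/2::real)^k * t0 \<le> t0" for k
      by (rule mult_left_le_one_le) (use t0 in \<open>auto simp: power_le_one\<close>)
    have inv: "norm (fst (X k) - xs) \<le> (1/2)^k * t0 \<and>
               norm (snd (X k) - Ji) \<le> e/2 + B * \<epsilon> powr d * (1 - r^k) / (1 - r)" for k
    proof (induction k)
      case 0
      then show ?case using H0 by (simp add: X_def t0_def)
    next
      case (Suc k)
      have XS: "X (Suc k) = qn_step F (fst (X k), snd (X k))" by (simp add: X_def)
      note hk = hk0[of k]
      have tk: "norm (fst (X k) - xs) \<le> \<epsilon>" using Suc.IH hk t0 by linarith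
      have rk: "0 \<le> r^k" "r^k \<le> 1" using r by (simp_all add: power_le_one)
      have "B * \<epsilon> powr d * (1 - r^k) / (1 - r) \<le> B * \<epsilon> powr d / (1 - r)"
        using rk r B by (simp add: divide_right_mono mult_left_le)
      then have Ek: "norm (snd (X k) - Ji) \<le> e" using Suc.IH Bed' by linarith
      note st = step[OF tk Ek, folded XS]
      have A1: "norm (fst (X (Suc k)) - xs) \<le> (1/2)^(Suc k) * t0" using st Suc.IH by simp
      have "norm (fst (X k) - xs) powr d \<le> ((1/2)^k * \<epsilon>) powr d"
        by (rule powr_mono2) (use d Suc.IH t0 in \<open>auto intro: order_trans mult_left_mono\<close>)
      also have "\<dots> = r^k * \<epsilon> powr d" using rpow eps by simp
      finally have pk: "B * norm (fst (X k) - xs) powr d \<le> B * (r^k * \<epsilon> powr d)"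
        using B by (simp add: mult_left_mono)
      have alg: "B * \<epsilon> powr d * (1 - r^k) / (1 - r) + B * (r^k * \<epsilon> powr d)
           = B * \<epsilon> powr d * (1 - r^Suc k) / (1 - r)" using r by (simp add: field_simps)
      have A2: "norm (snd (X (Suc k)) - Ji) \<le> e/2 + B * \<epsilon> powr d * (1 - r^Suc k) / (1 - r)"
        using st Suc.IH pk alg by linarith
      show ?case using A1 A2 by blast
    qed
    have bnd: "norm (fst (X k) - xs) < \<epsilon>" for k
      using inv[of k] hk0[of k] t0 by linarith
    have "(\<lambda>k. (1/2::real)^k * t0) \<longlonglongrightarrow> 0"
      by (simp add: LIMSEQ_power_zero tendsto_mult_left_zero)
    then have "(\<lambda>k. fst (X k) - xs) \<longlonglongrightarrow> 0"
      by (rule Lim_null_comparison[rotated]) (use inv in auto)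
    then have "(\<lambda>k. fst (X k)) \<longlonglongrightarrow> xs" by (rule LIM_zero_cancel)
    then show ?thesis using bnd by (simp add: X_def)
  qed
  show ?thesis
    apply (rule exI[of _ \<epsilon>], intro conjI eps)
    apply (rule exI[of _ "e / 2"])
    using e firstc second by auto
qed


lemma opnorm_bound:
  fixes nv :: "real^'n \<Rightarrow> real"
  assumes nv: "is_vnorm nv" and c1: "c1 > 0" and c2: "c2 > 0"
    and eq: "\<And>x. c1 * norm x \<le> nv x \<and> nv x \<le> c2 * norm x"
  shows "norm (A *v h) \<le> c2 / c1 * opnorm nv A * norm h"
proof -
  let ?S = "{nv (A *v x) / nv x | x. x \<noteq> 0}"
  have bdd: "bdd_above ?S"
  proof (rule bdd_aboveI)
    fix y assume "y \<in> ?S"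
    then obtain x where x: "x \<noteq> 0" "y = nv (A *v x) / nv x" by blast
    have nx: "nv x \<ge> c1 * norm x" "c1 * norm x > 0" using eq[of x] x c1 by auto
    have "nv (A *v x) \<le> c2 * (norm A * norm x)"
      using eq[of "A *v x"] norm_mv_le[of A x] c2 by (smt (verit) mult_left_mono)
    then have "y \<le> c2 * (norm A * norm x) / (c1 * norm x)"
      using x nx by (smt (verit) divide_mono vn_nonneg[OF nv] mult_nonneg_nonneg)
    also have "\<dots> = c2 * norm A / c1" using x(1) c1 by (simp add: field_simps)
    finally show "y \<le> c2 * norm A / c1" .
  qed
  show ?thesis
  proof (cases "h = 0")
    case True then show ?thesis by simp
  next
    case False
    have nh: "nv h > 0" using eq[of h] False c1 by (smt (verit) mult_pos_pos zero_less_norm_iff)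
    have "nv (A *v h) / nv h \<le> opnorm nv A"
      unfolding opnorm_def by (rule cSup_upper[OF _ bdd]) (use False in blast)
    then have o: "nv (A *v h) \<le> opnorm nv A * nv h" using nh by (simp add: field_simps)
    have o0: "opnorm nv A \<ge> 0"
      using \<open>nv (A *v h) / nv h \<le> opnorm nv A\<close> vn_nonneg[OF nv, of "A *v h"] nh
      by (smt (verit) divide_nonneg_pos)
    have "c1 * norm (A *v h) \<le> opnorm nv A * (c2 * norm h)"
      using eq[of "A *v h"] eq[of h] o o0 by (smt (verit) mult_left_mono)
    then show ?thesis using c1 by (simp add: field_simps)
  qed
qed

theorem theorem2:
  fixes F :: "real^'n \<Rightarrow> real^'n"
    and dG :: "real^'n \<Rightarrow> real^'n^'n"
    and xs :: "real^'n"
    and nv :: "real^'n \<Rightarrow> real"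
    and D :: "(real^'n) set"
    and d K mu2 :: real
    and M :: "real^'n^'n"
  assumes nv: "is_vnorm nv"
    and MM: "\<exists>S \<tau>. open S \<and> xs \<in> S \<and> 0 < \<tau> \<and> \<tau> < 1 \<and>
                 (\<forall>x\<in>S. nv (F x - xs) \<le> \<tau> * nv (x - xs))"
    and D: "open D" "convex D" "xs \<in> D"
    and deriv: "\<forall>x\<in>D. (resid F has_derivative (\<lambda>h. dG x *v h)) (at x)"
    and root: "resid F xs = 0"
    and nonsing: "invertible (dG xs)"
    and d: "d > 0"
    and hold: "\<forall>x\<in>D. opnorm nv (dG x - dG xs) \<le> K * nv (x - xs) powr d"
    and mu2: "mu2 \<ge> 0"
    and Msym: "transpose M = M"
    and Minv: "invertible M"
    and N': "\<exists>N'. open N' \<and> (xs, matrix_inv (dG xs)) \<in> N' \<and>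
              (\<forall>x H. (x, H) \<in> N' \<longrightarrow> qn_v F x \<noteq> 0 \<longrightarrow>
                 nv (M *v qn_v F x - matrix_inv M *v qn_v F x) / nv (matrix_inv M *v qn_v F x)
                   \<le> mu2 * nv (qn_v F x) powr d)"
  shows "(\<exists>N. open N \<and> (xs, matrix_inv (dG xs)) \<in> N \<and>
            (\<forall>x H. (x, H) \<in> N \<longrightarrow> x \<noteq> xs \<longrightarrow> qn_v F x \<noteq> 0)) \<and>
         (\<exists>\<epsilon>>0. \<exists>\<delta>>0. \<forall>x0 H0.
            nv (x0 - xs) < \<epsilon> \<longrightarrow>
            frob_norm (M ** (H0 - matrix_inv (dG xs)) ** M) < \<delta> \<longrightarrow>
            (\<forall>k. fst ((qn_step F ^^ k) (x0, H0)) \<noteq> xs \<longrightarrow>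
                   qn_v F (fst ((qn_step F ^^ k) (x0, H0))) \<noteq> 0) \<and>
            (\<lambda>k. fst ((qn_step F ^^ k) (x0, H0))) \<longlonglongrightarrow> xs)"

proof -
  obtain c1 c2 where c: "0 < c1" "0 < c2" and eq: "\<And>x. c1 * norm x \<le> nv x \<and> nv x \<le> c2 * norm x"
    using vn_equiv[OF nv] by blast
  obtain S \<tau> where S: "open S" "xs \<in> S" "0 < \<tau>" "\<tau> < 1" and Sc: "\<And>x. x \<in> S \<Longrightarrow> nv (F x - xs) \<le> \<tau> * nv (x - xs)"
    using MM by blast
  obtain s where s: "s > 0" "ball xs s \<subseteq> S" using S open_contains_ball by blast
  obtain rD where rD: "rD > 0" "ball xs rD \<subseteq> D" using D open_contains_ball by blast
  define r0 where "r0 = min s (rD / 2)"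
  define A where "A = max 1 (\<tau> * c2 / c1)"
  define K' where "K' = max K 0"
  define L where "L = c2 / c1 * K' * c2 powr d"
  have r0: "r0 > 0" unfolding r0_def using s rD by simp
  have A: "A \<ge> 1" unfolding A_def by simp
  have L: "L \<ge> 0" unfolding L_def K'_def using c by simp
  have Fb: "norm (F x - xs) \<le> A * norm (x - xs)" if "norm (x - xs) < r0" for x
  proof -
    have "x \<in> S" using that s unfolding r0_def by (auto simp: dist_norm norm_minus_commute)
    then have "c1 * norm (F x - xs) \<le> \<tau> * (c2 * norm (x - xs))"
      using Sc[of x] eq[of "F x - xs"] eq[of "x - xs"] S(3) by (smt (verit) mult_left_mono)
    then have "norm (F x - xs) \<le> \<tau> * c2 / c1 * norm (x - xs)" using c by (simp add: field_simps)
    also have "\<dots> \<le> A * norm (x - xs)" unfolding A_def by (rule mult_right_mono[OF max.cobounded2 norm_ge_zero])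
    finally show ?thesis .
  qed
  have tay: "norm (resid F y - resid F x - dG xs *v (y - x)) \<le> L * \<rho> powr d * norm (y - x)"
    if "\<rho> \<le> r0" "norm (x - xs) \<le> \<rho>" "norm (y - xs) \<le> \<rho>" for \<rho> x y
  proof -
    let ?C = "cball xs \<rho>"
    have CD: "?C \<subseteq> D" using that(1) rD unfolding r0_def by (auto simp: subset_eq dist_norm)
    have xC: "x \<in> ?C" "y \<in> ?C" using that(2,3) by (auto simp: dist_norm norm_minus_commute)
    have rho0: "\<rho> \<ge> 0" using that(2) norm_ge_zero[of "x - xs"] by linarith
    have "norm (resid F y - resid F x - (\<lambda>h. dG xs *v h) (y - x)) \<le> norm (y - x) * (L * \<rho> powr d)"
    proof (rule differentiable_bound_linearization[where S = ?C and f' = "\<lambda>z h. dG z *v h"])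
      show "x + t *\<^sub>R (y - x) \<in> ?C" if "t \<in> {0..1}" for t
      proof -
        have "(1 - t) *\<^sub>R x + t *\<^sub>R y \<in> ?C" using convexD_alt[OF convex_cball xC] that by auto
        moreover have "(1 - t) *\<^sub>R x + t *\<^sub>R y = x + t *\<^sub>R (y - x)" by (simp add: algebra_simps)
        ultimately show ?thesis by simp
      qed
      show "(resid F has_derivative (\<lambda>h. dG z *v h)) (at z within ?C)" if "z \<in> ?C" for z
      proof -
        have "z \<in> D" using CD that by auto
        then have "(resid F has_derivative (\<lambda>h. dG z *v h)) (at z)" using deriv by blast
        then show ?thesis by (rule has_derivative_at_withinI)
      qed
      show "xs \<in> ?C" using rho0 by simp
      show "onorm ((\<lambda>h. dG z *v h) - (\<lambda>h. dG xs *v h)) \<le> L * \<rho> powr d" if "z \<in> ?C" for z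
      proof (rule onorm_le)
        fix h
        have zD: "z \<in> D" using that CD by auto
        have nz: "norm (z - xs) \<le> \<rho>" using that by (simp add: dist_norm norm_minus_commute)
        have "((\<lambda>h. dG z *v h) - (\<lambda>h. dG xs *v h)) h = (dG z - dG xs) *v h"
          by (simp add: algebra_simps)
        then have "norm (((\<lambda>h. dG z *v h) - (\<lambda>h. dG xs *v h)) h) \<le> c2 / c1 * opnorm nv (dG z - dG xs) * norm h"
          using opnorm_bound[OF nv c eq] by simp
        also have "\<dots> \<le> c2 / c1 * (K' * (c2 powr d * \<rho> powr d)) * norm h"
        proof -
          have "nv (z - xs) powr d \<le> (c2 * \<rho>) powr d"
            by (rule powr_mono2) (use d eq[of "z - xs"] vn_nonneg[OF nv] c nz in \<open>auto intro: order_trans mult_left_mono\<close>)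
          also have "\<dots> = c2 powr d * \<rho> powr d" using c rho0 by (simp add: powr_mult)
          finally have p: "nv (z - xs) powr d \<le> c2 powr d * \<rho> powr d" .
          have "opnorm nv (dG z - dG xs) \<le> K * nv (z - xs) powr d" using hold zD by blast
          also have "\<dots> \<le> K' * nv (z - xs) powr d" unfolding K'_def by (simp add: mult_right_mono)
          also have "\<dots> \<le> K' * (c2 powr d * \<rho> powr d)" using p unfolding K'_def by (simp add: mult_left_mono)
          finally have "opnorm nv (dG z - dG xs) \<le> K' * (c2 powr d * \<rho> powr d)" .
          moreover have "c2 / c1 \<ge> 0" using c by simp
          ultimately show ?thesis by (intro mult_right_mono mult_left_mono) simp_all
        qed
        also have "\<dots> = L * \<rho> powr d * norm h" unfolding L_def by (simp add: algebra_simps)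
        finally show "norm (((\<lambda>h. dG z *v h) - (\<lambda>h. dG xs *v h)) h) \<le> L * \<rho> powr d * norm h" .
      qed
    qed
    then show ?thesis by (simp add: mult.commute)
  qed
  have JiJ: "matrix_inv (dG xs) ** dG xs = mat 1" using minv[OF nonsing] by blast
  obtain \<epsilon> e where eps: "\<epsilon> > 0" "e > 0"
    and C1: "\<forall>x. norm (x - xs) < \<epsilon> \<longrightarrow> x \<noteq> xs \<longrightarrow> qn_v F x \<noteq> 0"
    and C2: "\<forall>x0 H0. norm (x0 - xs) < \<epsilon> \<longrightarrow> norm (H0 - matrix_inv (dG xs)) \<le> e \<longrightarrow>
        (\<forall>k. norm (fst ((qn_step F ^^ k) (x0,H0)) - xs) < \<epsilon>) \<and>
        (\<lambda>k. fst ((qn_step F ^^ k) (x0,H0))) \<longlonglongrightarrow> xs"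
    using core[OF r0 A L d Fb tay root JiJ] by blast
  obtain C where C: "C > 0" "\<And>E. norm E \<le> C * norm (M ** E ** M)" using sandwich_bound[OF Minv] by blast
  have part1: "\<exists>N. open N \<and> (xs, matrix_inv (dG xs)) \<in> N \<and>
            (\<forall>x H. (x, H) \<in> N \<longrightarrow> x \<noteq> xs \<longrightarrow> qn_v F x \<noteq> 0)"
    apply (rule exI[of _ "ball xs \<epsilon> \<times> UNIV"])
    using eps C1 by (auto simp: open_Times dist_norm norm_minus_commute)
  have part2: "\<exists>\<epsilon>>0. \<exists>\<delta>>0. \<forall>x0 H0.
            nv (x0 - xs) < \<epsilon> \<longrightarrow>
            frob_norm (M ** (H0 - matrix_inv (dG xs)) ** M) < \<delta> \<longrightarrow>
            (\<forall>k. fst ((qn_step F ^^ k) (x0, H0)) \<noteq> xs \<longrightarrow>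
                   qn_v F (fst ((qn_step F ^^ k) (x0, H0))) \<noteq> 0) \<and>
            (\<lambda>k. fst ((qn_step F ^^ k) (x0, H0))) \<longlonglongrightarrow> xs"
  proof -
    have main: "(\<forall>k. fst ((qn_step F ^^ k) (x0, H0)) \<noteq> xs \<longrightarrow>
                   qn_v F (fst ((qn_step F ^^ k) (x0, H0))) \<noteq> 0) \<and>
            (\<lambda>k. fst ((qn_step F ^^ k) (x0, H0))) \<longlonglongrightarrow> xs"
      if x0: "nv (x0 - xs) < c1 * \<epsilon>" and H0: "frob_norm (M ** (H0 - matrix_inv (dG xs)) ** M) < e / C"
      for x0 H0
    proof -
      have x0': "norm (x0 - xs) < \<epsilon>" using x0 eq[of "x0 - xs"] c by (smt (verit) mult_less_cancel_left_pos)
      have "norm (H0 - matrix_inv (dG xs)) \<le> C * (e / C)"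
        using C(2)[of "H0 - matrix_inv (dG xs)"] H0 C(1) unfolding frob_eq_norm
        by (smt (verit) mult_left_mono)
      then have H0': "norm (H0 - matrix_inv (dG xs)) \<le> e" using C by simp
      note R = C2[rule_format, OF x0' H0']
      show ?thesis using R C1 by blast
    qed
    have "c1 * \<epsilon> > 0" "e / C > 0" using c eps C by simp_all
    then show ?thesis using main by blast
  qed
  show ?thesis using part1 part2 by blast
qed

end
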